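(* Let $G=(V,E,w)$, $s$, $\tau$ (with $|\tau|\ge 2$) and a budget $b\ge 0$ be as in the context, and suppose that at least one feasible subgraph exists. Then among the maximizers of $\textsc{CD}_{\tau,s}(S)$ over all feasible subgraphs $S\subseteq G$, there is one that is a directed acyclic graph in which $s$ is the unique source (a source being a vertex $u$ with no edge $v\to u$ in the subgraph).
   Context: Let $G=(V,E,w)$ be a finite directed graph with non-negative edge weights $w:E\to\mathbb{R}_{\ge 0}$. A path from $u$ to $v$ in a subgraph $S\subseteq G$ is a sequence $u=v_0\to v_1\to\cdots\to v_k=v$ ($k\ge 0$) with each $v_i\to v_{i+1}$ an edge of $S$; for $i\le j$, $w_P(v_i,v_j)=\sum_{m=i}^{j-1} w(v_m\to v_{m+1})$. A vertex $y$ is reachable from $x$ in $S$ if there is a path from $x$ to $y$ in $S$ (a vertex is reachable from itself). Fix a start vertex $s\in V$ and a finite target set $\tau\subseteq V\setminus\{s\}$ with $|\tau|\ge 2$. The cost of a subgraph $S$ is $w(S)=\sum_{e\in E(S)} w(e)$. For a subgraph $S$ containing $s$ and $\tau$ in which every target is reachable from $s$: for a path $P=v_0\to\cdots\to v_k$ in $S$ with $v_0=s$, $v_k=t\in\tau$, let $\ell$ be the largest index such that some target in $\tau\setminus\{t\}$ is reachable from $v_\ell$ in $S$; the last deceptive point is $l(P,t)=v_\ell$. The unique distance of $t\in\tau$ is $\textsc{U}_S(t)=\min\{w_P(l(P,t),t): P \text{ a path in } S \text{ from } s \text{ to } t\}$, and the counterdeceptiveness of $S$ is $\textsc{CD}_{\tau,s}(S)=\min_{t\in\tau}\textsc{U}_S(t)$.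 Given a budget $b\ge 0$, a subgraph $S\subseteq G$ is feasible if $s\in V(S)$, $\tau\subseteq V(S)$, every target is reachable from $s$ in $S$, and $w(S)\le b$. A maximizer is a feasible $S$ maximizing $\textsc{CD}_{\tau,s}(S)$ among feasible subgraphs. *)

theory Defs
  imports Complex_Main
begin

definition is_subgraph :: "'a set \<Rightarrow> ('a \<times> 'a) set \<Rightarrow> 'a set \<Rightarrow> ('a \<times> 'a) set \<Rightarrow> bool" where
  "is_subgraph V E VS ES \<longleftrightarrow> VS \<subseteq> V \<and> ES \<subseteq> E \<and> ES \<subseteq> VS \<times> VS"

definition is_path :: "'a set \<Rightarrow> ('a \<times> 'a) set \<Rightarrow> 'a list \<Rightarrow> bool" where
  "is_path VS ES P \<longleftrightarrow> P \<noteq> [] \<and> set P \<subseteq> VS \<and>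
     (\<forall>i. Suc i < length P \<longrightarrow> (P ! i, P ! Suc i) \<in> ES)"

definition reachable :: "'a set \<Rightarrow> ('a \<times> 'a) set \<Rightarrow> 'a \<Rightarrow> 'a \<Rightarrow> bool" where
  "reachable VS ES x y \<longleftrightarrow> (\<exists>P. is_path VS ES P \<and> hd P = x \<and> last P = y)"

definition path_weight :: "('a \<times> 'a \<Rightarrow> real) \<Rightarrow> 'a list \<Rightarrow> nat \<Rightarrow> nat \<Rightarrow> real" where
  "path_weight w P i j = (\<Sum>m\<in>{i..<j}. w (P ! m, P ! Suc m))"

definition last_dec_idx :: "'a set \<Rightarrow> ('a \<times> 'a) set \<Rightarrow> 'a set \<Rightarrow> 'a list \<Rightarrow> 'a \<Rightarrow> nat" where
  "last_dec_idx VS ES \<tau> P t =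
     (GREATEST l. l < length P \<and> (\<exists>t'\<in>\<tau> - {t}. reachable VS ES (P ! l) t'))"

text \<open>Unique distance U_S(t): minimum over s-t paths P of w_P(l(P,t), t)
  (rendered as the infimum of the set of these values, which is attained).\<close>
definition unique_dist :: "'a set \<Rightarrow> ('a \<times> 'a) set \<Rightarrow> ('a \<times> 'a \<Rightarrow> real) \<Rightarrow> 'a \<Rightarrow> 'a set \<Rightarrow> 'a \<Rightarrow> real" where
  "unique_dist VS ES w s \<tau> t =
     Inf {path_weight w P (last_dec_idx VS ES \<tau> P t) (length P - 1) | P.
            is_path VS ES P \<and> hd P = s \<and> last P = t}"

definition counterdeceptiveness :: "'a set \<Rightarrow> ('a \<times> 'a) set \<Rightarrow> ('a \<times> 'a \<Rightarrow> real) \<Rightarrow> 'a \<Rightarrow> 'a set \<Rightarrow> real" where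
  "counterdeceptiveness VS ES w s \<tau> = Min ((\<lambda>t. unique_dist VS ES w s \<tau> t) ` \<tau>)"

definition feasible :: "'a set \<Rightarrow> ('a \<times> 'a) set \<Rightarrow> ('a \<times> 'a \<Rightarrow> real) \<Rightarrow> 'a \<Rightarrow> 'a set \<Rightarrow> real
    \<Rightarrow> 'a set \<Rightarrow> ('a \<times> 'a) set \<Rightarrow> bool" where
  "feasible V E w s \<tau> b VS ES \<longleftrightarrow> is_subgraph V E VS ES \<and> s \<in> VS \<and> \<tau> \<subseteq> VS \<and>
     (\<forall>t\<in>\<tau>. reachable VS ES s t) \<and> (\<Sum>e\<in>ES. w e) \<le> b"

definition maximizer :: "'a set \<Rightarrow> ('a \<times> 'a) set \<Rightarrow> ('a \<times> 'a \<Rightarrow> real) \<Rightarrow> 'a \<Rightarrow> 'a set \<Rightarrow> real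
    \<Rightarrow> 'a set \<Rightarrow> ('a \<times> 'a) set \<Rightarrow> bool" where
  "maximizer V E w s \<tau> b VS ES \<longleftrightarrow> feasible V E w s \<tau> b VS ES \<and>
     (\<forall>VS' ES'. feasible V E w s \<tau> b VS' ES' \<longrightarrow>
        counterdeceptiveness VS' ES' w s \<tau> \<le> counterdeceptiveness VS ES w s \<tau>)"

definition is_source :: "('a \<times> 'a) set \<Rightarrow> 'a \<Rightarrow> bool" where
  "is_source ES u \<longleftrightarrow> \<not> (\<exists>v. (v, u) \<in> ES)"

end

theory Submission
  imports Defs
begin

lemma is_path_single[simp]: "is_path VS ES [x] \<longleftrightarrow> x \<in> VS"
  by (auto simp: is_path_def)

lemma is_path_Cons2[simp]:
  "is_path VS ES (x # y # zs) \<longleftrightarrow> x \<in> VS \<and> (x, y) \<in> ES \<and> is_path VS ES (y # zs)"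
proof
  assume H: "is_path VS ES (x # y # zs)"
  have "(x, y) \<in> ES" using H unfolding is_path_def by (metis length_Cons nth_Cons_0 nth_Cons_Suc Suc_less_eq zero_less_Suc)
  moreover have "\<forall>i. Suc i < length (y # zs) \<longrightarrow> ((y # zs) ! i, (y # zs) ! Suc i) \<in> ES"
  proof (intro allI impI)
    fix i assume "Suc i < length (y # zs)"
    then have "Suc (Suc i) < length (x # y # zs)" by simp
    then show "((y # zs) ! i, (y # zs) ! Suc i) \<in> ES" using H unfolding is_path_def
      by (metis nth_Cons_Suc)
  qed
  ultimately show "x \<in> VS \<and> (x, y) \<in> ES \<and> is_path VS ES (y # zs)" using H
    unfolding is_path_def by auto
next
  assume H: "x \<in> VS \<and> (x, y) \<in> ES \<and> is_path VS ES (y # zs)"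
  show "is_path VS ES (x # y # zs)" unfolding is_path_def
  proof (intro conjI allI impI)
    show "set (x # y # zs) \<subseteq> VS" using H by (auto simp: is_path_def)
    fix i assume i: "Suc i < length (x # y # zs)"
    show "((x # y # zs) ! i, (x # y # zs) ! Suc i) \<in> ES"
    proof (cases i)
      case 0 then show ?thesis using H by simp
    next
      case (Suc j) then show ?thesis using H i unfolding is_path_def by auto
    qed
  qed simp
qed

lemma is_path_append:
  "is_path VS ES xs \<Longrightarrow> is_path VS ES ys \<Longrightarrow> (last xs, hd ys) \<in> ES \<Longrightarrow> is_path VS ES (xs @ ys)"
proof (induction xs rule: induct_list012)
  case 1 then show ?case by (simp add: is_path_def)
next
  case (2 x) show ?case
  proof (cases ys)
    case Nil then show ?thesis using 2 by (simp add: is_path_def)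
  next
    case Cons then show ?thesis using 2 by simp
  qed
next
  case (3 x y zs) then show ?case by auto
qed

lemma is_path_take: "is_path VS ES P \<Longrightarrow> 0 < n \<Longrightarrow> is_path VS ES (take n P)"
  unfolding is_path_def by (auto dest: in_set_takeD)

lemma is_path_mono: "is_path VS' ES' P \<Longrightarrow> VS' \<subseteq> VS \<Longrightarrow> ES' \<subseteq> ES \<Longrightarrow> is_path VS ES P"
  unfolding is_path_def by blast

lemma reachable_mono: "reachable VS' ES' x y \<Longrightarrow> VS' \<subseteq> VS \<Longrightarrow> ES' \<subseteq> ES \<Longrightarrow> reachable VS ES x y"
  unfolding reachable_def using is_path_mono by blast

lemma last_take_Suc: "i < length P \<Longrightarrow> last (take (Suc i) P) = P ! i"
  by (simp add: take_Suc_conv_app_nth)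

lemma prefix_reach:
  assumes "is_path VS ES P" "hd P = s" "i < length P"
  shows "reachable VS ES s (P ! i)"
  unfolding reachable_def
  by (rule exI[of _ "take (Suc i) P"]) (use assms in \<open>auto simp: is_path_take hd_take last_take_Suc\<close>)

lemma ldi_ok:
  assumes reach: "\<forall>t\<in>\<tau>. reachable VS ES s t" and c: "card \<tau> \<ge> 2" and t: "t \<in> \<tau>"
    and P: "P \<noteq> []" "hd P = s"
  shows "last_dec_idx VS ES \<tau> P t < length P \<and>
    (\<exists>t'\<in>\<tau> - {t}. reachable VS ES (P ! last_dec_idx VS ES \<tau> P t) t')"
proof -
  have "finite \<tau>" using c by (metis card.infinite not_numeral_le_zero)
  then have "card (\<tau> - {t}) \<ge> 1" using c t by simp
  then obtain t' where t': "t' \<in> \<tau> - {t}" by (metis card.empty ex_in_conv not_one_le_zero)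
  have "0 < length P \<and> (\<exists>t'\<in>\<tau> - {t}. reachable VS ES (P ! 0) t')"
    using t' reach P by (auto simp: hd_conv_nth)
  then show ?thesis unfolding last_dec_idx_def
    by (rule GreatestI_nat[where b="length P"]) auto
qed

lemma ldi_mono:
  assumes reach: "\<forall>t\<in>\<tau>. reachable VS' ES' s t" and c: "card \<tau> \<ge> 2" and t: "t \<in> \<tau>"
    and P: "P \<noteq> []" "hd P = s" and sub: "VS' \<subseteq> VS" "ES' \<subseteq> ES"
  shows "last_dec_idx VS' ES' \<tau> P t \<le> last_dec_idx VS ES \<tau> P t"
proof -
  from ldi_ok[OF reach c t P] have h: "last_dec_idx VS' ES' \<tau> P t < length P \<and>
    (\<exists>t'\<in>\<tau> - {t}. reachable VS ES (P ! last_dec_idx VS' ES' \<tau> P t) t')"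
    using reachable_mono[OF _ sub] by blast
  show ?thesis unfolding last_dec_idx_def
    by (rule Greatest_le_nat[where b="length P"]) (use h in \<open>auto simp: last_dec_idx_def\<close>)
qed

lemma pw_nonneg:
  assumes "is_path VS ES P" "ES \<subseteq> E" "\<forall>e\<in>E. 0 \<le> w e" "j \<le> length P - 1"
  shows "0 \<le> path_weight w P i j"
  unfolding path_weight_def
proof (rule sum_nonneg)
  fix m assume "m \<in> {i..<j}"
  then have "Suc m < length P" using assms(4) by auto
  then have "(P!m, P!Suc m) \<in> E" using assms(1,2) by (auto simp: is_path_def)
  with assms(3) show "0 \<le> w (P!m, P!Suc m)" by blast
qed

lemma pw_anti:
  assumes "is_path VS ES P" "ES \<subseteq> E" "\<forall>e\<in>E. 0 \<le> w e" "i \<le> k" "k < length P"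
  shows "path_weight w P k (length P - 1) \<le> path_weight w P i (length P - 1)"
proof -
  have "path_weight w P i (length P - 1) = path_weight w P i k + path_weight w P k (length P - 1)"
    unfolding path_weight_def using assms by (simp add: sum.atLeastLessThan_concat)
  moreover have "0 \<le> path_weight w P i k" using pw_nonneg[OF assms(1-3)] assms by simp
  ultimately show ?thesis by simp
qed

lemma ud_mono:
  assumes E: "ES \<subseteq> E" "\<forall>e\<in>E. 0 \<le> w e" and sub: "VS' \<subseteq> VS" "ES' \<subseteq> ES"
    and r: "\<forall>t\<in>\<tau>. reachable VS ES s t" and r': "\<forall>t\<in>\<tau>. reachable VS' ES' s t"
    and c: "card \<tau> \<ge> 2" and t: "t \<in> \<tau>"
  shows "unique_dist VS ES w s \<tau> t \<le> unique_dist VS' ES' w s \<tau> t"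
proof -
  let ?A = "{path_weight w P (last_dec_idx VS ES \<tau> P t) (length P - 1) | P.
            is_path VS ES P \<and> hd P = s \<and> last P = t}"
  let ?B = "{path_weight w P (last_dec_idx VS' ES' \<tau> P t) (length P - 1) | P.
            is_path VS' ES' P \<and> hd P = s \<and> last P = t}"
  have bdd: "bdd_below ?A"
    by (rule bdd_belowI[where m=0]) (use pw_nonneg[OF _ E] in auto)
  have ne: "?B \<noteq> {}" using r' t unfolding reachable_def by blast
  have "Inf ?A \<le> Inf ?B"
  proof (rule cInf_greatest[OF ne])
    fix x assume "x \<in> ?B"
    then obtain P where P: "is_path VS' ES' P" "hd P = s" "last P = t"
      and x: "x = path_weight w P (last_dec_idx VS' ES' \<tau> P t) (length P - 1)" by blast
    have P2: "is_path VS ES P" using is_path_mono[OF P(1) sub] .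
    have Pne: "P \<noteq> []" using P(1) by (simp add: is_path_def)
    have "Inf ?A \<le> path_weight w P (last_dec_idx VS ES \<tau> P t) (length P - 1)"
      by (rule cInf_lower[OF _ bdd]) (use P2 P in blast)
    also have "\<dots> \<le> x" unfolding x
      by (rule pw_anti[OF P2 E ldi_mono[OF r' c t Pne P(2) sub]])
         (use ldi_ok[OF r c t Pne P(2)] in simp)
    finally show "Inf ?A \<le> x" .
  qed
  then show ?thesis unfolding unique_dist_def .
qed

lemma cd_mono:
  assumes E: "ES \<subseteq> E" "\<forall>e\<in>E. 0 \<le> w e" and sub: "VS' \<subseteq> VS" "ES' \<subseteq> ES"
    and r: "\<forall>t\<in>\<tau>. reachable VS ES s t" and r': "\<forall>t\<in>\<tau>. reachable VS' ES' s t"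
    and c: "card \<tau> \<ge> 2"
  shows "counterdeceptiveness VS ES w s \<tau> \<le> counterdeceptiveness VS' ES' w s \<tau>"
proof -
  have fin: "finite \<tau>" using c by (metis card.infinite not_numeral_le_zero)
  have ne: "\<tau> \<noteq> {}" using c by auto
  have "Min ((\<lambda>t. unique_dist VS' ES' w s \<tau> t) ` \<tau>) \<in> (\<lambda>t. unique_dist VS' ES' w s \<tau> t) ` \<tau>"
    using fin ne by (intro Min_in) auto
  then obtain t0 where t0: "t0 \<in> \<tau>" "Min ((\<lambda>t. unique_dist VS' ES' w s \<tau> t) ` \<tau>) = unique_dist VS' ES' w s \<tau> t0"
    by auto
  have "Min ((\<lambda>t. unique_dist VS ES w s \<tau> t) ` \<tau>) \<le> unique_dist VS ES w s \<tau> t0"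
    using fin t0 by simp
  also have "\<dots> \<le> unique_dist VS' ES' w s \<tau> t0" by (rule ud_mono[OF E sub r r' c t0(1)])
  finally show ?thesis unfolding counterdeceptiveness_def using t0 by simp
qed

lemma is_path_drop: "is_path VS ES P \<Longrightarrow> n < length P \<Longrightarrow> is_path VS ES (drop n P)"
  unfolding is_path_def by (auto dest: in_set_dropD)

definition hdist :: "'a set \<Rightarrow> ('a \<times> 'a) set \<Rightarrow> 'a \<Rightarrow> 'a \<Rightarrow> nat" where
  "hdist VS ES s v = (LEAST n. \<exists>P. is_path VS ES P \<and> hd P = s \<and> last P = v \<and> length P = n)"

lemma hdist_ex:
  assumes "reachable VS ES s v"
  shows "\<exists>P. is_path VS ES P \<and> hd P = s \<and> last P = v \<and> length P = hdist VS ES s v"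
proof -
  from assms obtain P where "is_path VS ES P \<and> hd P = s \<and> last P = v" unfolding reachable_def by blast
  then have "\<exists>n P. is_path VS ES P \<and> hd P = s \<and> last P = v \<and> length P = n" by blast
  then show ?thesis unfolding hdist_def by (rule LeastI_ex)
qed

lemma hdist_le: "is_path VS ES P \<Longrightarrow> hd P = s \<Longrightarrow> last P = v \<Longrightarrow> hdist VS ES s v \<le> length P"
  unfolding hdist_def by (rule Least_le) blast

lemma hdist_pos: "reachable VS ES s v \<Longrightarrow> 1 \<le> hdist VS ES s v"
proof -
  assume "reachable VS ES s v"
  from hdist_ex[OF this] obtain P where "is_path VS ES P" "length P = hdist VS ES s v" by blast
  then show ?thesis by (cases P) (auto simp: is_path_def)
qed

lemma shortest_prefix:
  assumes P: "is_path VS ES P" "hd P = s" "length P = hdist VS ES s (last P)" and i: "i < length P"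
  shows "hdist VS ES s (P!i) = Suc i"
proof (rule antisym)
  show "hdist VS ES s (P!i) \<le> Suc i"
    using hdist_le[of VS ES "take (Suc i) P" s "P!i"] P i
    by (simp add: is_path_take hd_take last_take_Suc)
next
  show "Suc i \<le> hdist VS ES s (P!i)"
  proof (rule ccontr)
    assume "\<not> ?thesis"
    then have lt: "hdist VS ES s (P!i) < Suc i" by simp
    obtain Q where Q: "is_path VS ES Q" "hd Q = s" "last Q = P!i" "length Q = hdist VS ES s (P!i)"
      using hdist_ex[OF prefix_reach[OF P(1,2) i]] by blast
    have Qne: "Q \<noteq> []" using Q(1) by (simp add: is_path_def)
    let ?R = "Q @ drop (Suc i) P"
    have R: "is_path VS ES ?R \<and> last ?R = last P"
    proof (cases "Suc i < length P")
      case True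
      have e: "(P!i, P!Suc i) \<in> ES" using P(1) True by (simp add: is_path_def)
      have "is_path VS ES ?R"
        by (rule is_path_append[OF Q(1) is_path_drop[OF P(1) True]])
           (use e Q(3) True in \<open>simp add: hd_drop_conv_nth\<close>)
      moreover have "last ?R = last P" using True by simp
      ultimately show ?thesis by simp
    next
      case False
      then have "i = length P - 1" using i by simp
      moreover have "P \<noteq> []" using i by auto
      ultimately have "P!i = last P" by (simp add: last_conv_nth)
      then show ?thesis using False Q by simp
    qed
    have "hd ?R = s" using Q Qne by simp
    then have "hdist VS ES s (last P) \<le> length ?R" using hdist_le R by metis
    moreover have "length ?R < length P" using lt Q(4) i by simp
    ultimately show False using P(3) by simp
  qed
qed

lemma tree_path:
  assumes "reachable VS ES s v"
  shows "\<exists>P. is_path {x. reachable VS ES s x}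
     {(u,v) \<in> ES. reachable VS ES s u \<and> reachable VS ES s v \<and> hdist VS ES s v = Suc (hdist VS ES s u)} P
     \<and> hd P = s \<and> last P = v \<and> length P = hdist VS ES s v"
proof -
  obtain P where P: "is_path VS ES P" "hd P = s" "last P = v" "length P = hdist VS ES s v"
    using hdist_ex[OF assms] by blast
  have P3: "length P = hdist VS ES s (last P)" using P by simp
  have "is_path {x. reachable VS ES s x}
     {(u,v) \<in> ES. reachable VS ES s u \<and> reachable VS ES s v \<and> hdist VS ES s v = Suc (hdist VS ES s u)} P"
    unfolding is_path_def
  proof (intro conjI allI impI)
    show "P \<noteq> []" using P(1) by (simp add: is_path_def)
    show "set P \<subseteq> {x. reachable VS ES s x}"
      using prefix_reach[OF P(1,2)] by (auto simp: in_set_conv_nth)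
    fix i assume i: "Suc i < length P"
    have "(P!i, P!Suc i) \<in> ES" using P(1) i by (simp add: is_path_def)
    moreover have "reachable VS ES s (P!i)" "reachable VS ES s (P!Suc i)"
      using prefix_reach[OF P(1,2)] i by auto
    moreover have "hdist VS ES s (P!Suc i) = Suc (hdist VS ES s (P!i))"
      using shortest_prefix[OF P(1,2) P3] i by simp
    ultimately show "(P!i, P!Suc i) \<in> {(u,v) \<in> ES. reachable VS ES s u \<and> reachable VS ES s v \<and> hdist VS ES s v = Suc (hdist VS ES s u)}"
      by simp
  qed
  then show ?thesis using P by blast
qed

lemma trancl_hdist:
  assumes "(x, y) \<in> {(u,v) \<in> ES. reachable VS ES s u \<and> reachable VS ES s v \<and> hdist VS ES s v = Suc (hdist VS ES s u)}\<^sup>+"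
  shows "hdist VS ES s x < hdist VS ES s y"
  using assms by (induction rule: trancl_induct) auto

theorem lemma2:
  fixes V :: "'a set" and E :: "('a \<times> 'a) set" and w :: "'a \<times> 'a \<Rightarrow> real"
    and s :: 'a and \<tau> :: "'a set" and b :: real
  assumes "finite V"
    and "E \<subseteq> V \<times> V"
    and "\<forall>e\<in>E. 0 \<le> w e"
    and "s \<in> V"
    and "\<tau> \<subseteq> V - {s}"
    and "card \<tau> \<ge> 2"
    and "b \<ge> 0"
    and "\<exists>VS ES. feasible V E w s \<tau> b VS ES"
  shows "\<exists>VS ES. maximizer V E w s \<tau> b VS ES \<and> acyclic ES \<and>
           (\<forall>u\<in>VS. is_source ES u \<longleftrightarrow> u = s)"
proof -
  have finE: "finite E" using assms(1,2) by (metis finite_SigmaI finite_subset)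
  let ?F = "{(VS, ES). feasible V E w s \<tau> b VS ES}"
  let ?cd = "\<lambda>(VS, ES). counterdeceptiveness VS ES w s \<tau>"
  have "?F \<subseteq> Pow V \<times> Pow E" by (auto simp: feasible_def is_subgraph_def)
  then have finF: "finite ?F" using assms(1) finE by (meson finite_Pow_iff finite_SigmaI finite_subset)
  have neF: "?F \<noteq> {}" using assms(8) by auto
  have "Max (?cd ` ?F) \<in> ?cd ` ?F" using finF neF by (intro Max_in) auto
  then obtain VS ES where F: "feasible V E w s \<tau> b VS ES"
    and m: "counterdeceptiveness VS ES w s \<tau> = Max (?cd ` ?F)" by auto
  have best: "counterdeceptiveness VS' ES' w s \<tau> \<le> counterdeceptiveness VS ES w s \<tau>"
    if "feasible V E w s \<tau> b VS' ES'" for VS' ES'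
  proof -
    have "?cd (VS', ES') \<in> ?cd ` ?F" using that by force
    then show ?thesis unfolding m using Max_ge[OF finite_imageI[OF finF]] by simp
  qed
  define R where "R = {x. reachable VS ES s x}"
  define T where "T = {(u,v) \<in> ES. reachable VS ES s u \<and> reachable VS ES s v \<and> hdist VS ES s v = Suc (hdist VS ES s u)}"
  have sub: "is_subgraph V E VS ES" "s \<in> VS" "\<tau> \<subseteq> VS" "\<forall>t\<in>\<tau>. reachable VS ES s t"
    "(\<Sum>e\<in>ES. w e) \<le> b" using F by (auto simp: feasible_def)
  have ESE: "ES \<subseteq> E" using sub(1) by (simp add: is_subgraph_def)
  have RVS: "R \<subseteq> VS" unfolding R_def reachable_def is_path_def
    by (auto simp: last_conv_nth)
  have TES: "T \<subseteq> ES" unfolding T_def by auto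
  have TRR: "T \<subseteq> R \<times> R" unfolding T_def R_def by auto
  have reachT: "reachable R T s v" if "reachable VS ES s v" for v
    using tree_path[OF that] unfolding reachable_def R_def T_def by blast
  have reachs: "reachable VS ES s s" using sub(2) unfolding reachable_def
    by (intro exI[of _ "[s]"]) simp
  have sR: "s \<in> R" using reachs R_def by simp
  have featT: "feasible V E w s \<tau> b R T"
    unfolding feasible_def
  proof (intro conjI)
    show "is_subgraph V E R T" using sub(1) RVS TES TRR by (auto simp: is_subgraph_def)
    show "s \<in> R" by (rule sR)
    show "\<tau> \<subseteq> R" using sub(4) R_def by auto
    show "\<forall>t\<in>\<tau>. reachable R T s t" using sub(4) reachT by blast
    have "(\<Sum>e\<in>T. w e) \<le> (\<Sum>e\<in>ES. w e)"
      by (rule sum_mono2) (use finE ESE TES assms(3) in \<open>auto intro: finite_subset\<close>)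
    then show "(\<Sum>e\<in>T. w e) \<le> b" using sub(5) by simp
  qed
  have cdle: "counterdeceptiveness VS ES w s \<tau> \<le> counterdeceptiveness R T w s \<tau>"
    by (rule cd_mono[OF ESE assms(3) RVS TES sub(4)]) (use featT assms(6) in \<open>auto simp: feasible_def\<close>)
  have maxT: "maximizer V E w s \<tau> b R T"
    unfolding maximizer_def using featT best cdle by (meson order_trans)
  have acyc: "acyclic T" unfolding acyclic_def
  proof
    fix x show "(x, x) \<notin> T\<^sup>+"
    proof
      assume "(x, x) \<in> T\<^sup>+"
      then have "hdist VS ES s x < hdist VS ES s x" unfolding T_def by (rule trancl_hdist)
      then show False by simp
    qed
  qed
  have src: "\<forall>u\<in>R. is_source T u \<longleftrightarrow> u = s"
  proof
    fix u assume uR: "u \<in> R"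
    show "is_source T u \<longleftrightarrow> u = s"
    proof
      assume "u = s"
      have "hdist VS ES s s \<le> 1" using hdist_le[of VS ES "[s]" s s] sub(2) by simp
      moreover have "(v, s) \<in> T \<Longrightarrow> 1 \<le> hdist VS ES s v" for v
        unfolding T_def using hdist_pos by auto
      ultimately show "is_source T u" unfolding is_source_def T_def \<open>u = s\<close>
        by (auto simp: T_def) 
    next
      assume su: "is_source T u"
      show "u = s"
      proof (rule ccontr)
        assume "u \<noteq> s"
        obtain P where P: "is_path R T P" "hd P = s" "last P = u"
          using tree_path[of VS ES s u] uR unfolding R_def T_def by blast
        have "P \<noteq> []" using P(1) by (simp add: is_path_def)
        have "length P \<noteq> 1"
        proof
          assume "length P = 1"
          then obtain x where "P = [x]" by (metis One_nat_def length_0_conv length_Suc_conv)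
          then show False using P \<open>u \<noteq> s\<close> by simp
        qed
        then have l: "Suc (length P - 2) < length P" using \<open>P \<noteq> []\<close> by (cases P) auto
        have "(P ! (length P - 2), P ! Suc (length P - 2)) \<in> T" using P(1) l by (simp add: is_path_def)
        moreover have "P ! Suc (length P - 2) = u"
        proof -
          have "Suc (length P - 2) = length P - 1" using l by linarith
          then show ?thesis using P(3) \<open>P \<noteq> []\<close> by (simp add: last_conv_nth)
        qed
        ultimately show False using su unfolding is_source_def by auto
      qed
    qed
  qed
  show ?thesis using maxT acyc src by blast
qed

end
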